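(* Let $(V,E)$ be a finite graph and $p\in[0,1]$. Define rates on $\{0,1\}^E\times\{-1,1\}^V$ as follows: (a) if $\sigma'=\sigma$ and there is $e\in E$ with $\eta'=\eta^e$ and $\gamma_\eta(e)=1$, then $c((\eta,\sigma),(\eta',\sigma'))=\big((1-p)\mathbf 1_{\eta(e)=1}+p\mathbf 1_{\eta(e)=0}\big)\mathbf 1_{(\eta,\sigma)\in\mathcal C}$; (b) if $\sigma'=\sigma$ and there is $e\in E$ with $\eta'=\eta^e$, $\gamma_\eta(e)=0$ and $\delta_\sigma(e)=1$, then $c((\eta,\sigma),(\eta',\sigma'))=\frac12\big((1-p)\mathbf 1_{\eta(e)=1}+p\mathbf 1_{\eta(e)=0}\big)\mathbf 1_{(\eta,\sigma)\in\mathcal C}$; (c) if there are $x\in V$ and $e\in E_x$ with $\eta'=\eta^e$, $\gamma_\eta(e)=0$, $\eta(e)=\delta_\sigma(e)$, and $\sigma'(y)=-\sigma(y)$ for the vertices $y$ connected to $x$ by an open path of $\eta$ not using $e$ (including $y=x$), $\sigma'(y)=\sigma(y)$ otherwise, then $c((\eta,\sigma),(\eta',\sigma'))=\frac14\big((1-p)\mathbf 1_{\eta(e)=1}\mathbf 1_{(\eta,\sigma)\in\mathcal C}+p\mathbf 1_{\eta(e)=0}\mathbf 1_{(\eta',\sigma')\in\mathcal C}\big)$; (d) all other off-diagonal rates are $0$, and diagonal rates are minus the sum of off-diagonal rates of the row. Then these rates satisfy the detailed balance equation $IP(\eta,\sigma)c((\eta,\sigma),(\eta',\sigma'))=IP(\eta',\sigma')c((\eta',\sigma'),(\eta,\sigma))$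 for all pairs of states.
   Context: Edge configurations $\eta\in\{0,1\}^E$ (1 = open), spin configurations $\sigma\in\{-1,1\}^V$. For $e=\langle x,y\rangle$, $\delta_\sigma(e)=\mathbf 1_{\sigma(x)=\sigma(y)}$. $\mathcal C=\{(\eta,\sigma):\eta(e)\le\delta_\sigma(e)\ \forall e\in E\}$. $IP(\eta,\sigma)=\frac1Z\prod_{e\in E}\big(p\mathbf 1_{\eta(e)=1}\delta_\sigma(e)+(1-p)\mathbf 1_{\eta(e)=0}\big)$ with $Z$ the normalizing constant. $E_x$ is the set of edges with endvertex $x$; $\eta^e$ is $\eta$ with the value at $e$ changed. For $e=\langle x,y\rangle$, $\gamma_\eta(e)=1$ if $x,y$ are connected by a path of open edges of $\eta$ not using $e$, and $0$ otherwise. *)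

theory Defs
  imports Complex_Main
begin

(* Graph: vertex set V :: 'v set, edge set E :: 'v set set (each edge is a
   two-element set {x,y} of vertices).
   Edge configuration eta :: 'v set => bool (True = open), extended by False off E.
   Spin configuration sigma :: 'v => int with values in {-1,1} on V, extended by 1 off V. *)

type_synonym 'v state = "('v set \<Rightarrow> bool) \<times> ('v \<Rightarrow> int)"

definition states :: "'v set \<Rightarrow> 'v set set \<Rightarrow> 'v state set" where
  "states V E = {(\<eta>, \<sigma>). (\<forall>e. e \<notin> E \<longrightarrow> \<not> \<eta> e) \<and>
                              (\<forall>v\<in>V. \<sigma> v \<in> {-1, 1}) \<and> (\<forall>v. v \<notin> V \<longrightarrow> \<sigma> v = 1)}"

definition delta :: "('v \<Rightarrow> int) \<Rightarrow> 'v set \<Rightarrow> bool" where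
  "delta \<sigma> e \<longleftrightarrow> (\<exists>x y. e = {x, y} \<and> \<sigma> x = \<sigma> y)"

definition flip :: "('v set \<Rightarrow> bool) \<Rightarrow> 'v set \<Rightarrow> ('v set \<Rightarrow> bool)" where
  "flip \<eta> e = \<eta>(e := \<not> \<eta> e)"

definition conn_without :: "'v set set \<Rightarrow> ('v set \<Rightarrow> bool) \<Rightarrow> 'v set \<Rightarrow> 'v \<Rightarrow> 'v \<Rightarrow> bool" where
  "conn_without E \<eta> e x y \<longleftrightarrow>
     (x, y) \<in> {(a, b). \<exists>f\<in>E. f \<noteq> e \<and> \<eta> f \<and> f = {a, b}}\<^sup>*"

definition gamma :: "'v set set \<Rightarrow> ('v set \<Rightarrow> bool) \<Rightarrow> 'v set \<Rightarrow> bool" where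
  "gamma E \<eta> e \<longleftrightarrow> (\<exists>x y. e = {x, y} \<and> conn_without E \<eta> e x y)"

definition inC :: "'v set set \<Rightarrow> 'v state \<Rightarrow> bool" where
  "inC E s \<longleftrightarrow> (\<forall>e\<in>E. fst s e \<longrightarrow> delta (snd s) e)"

definition weight :: "'v set set \<Rightarrow> real \<Rightarrow> 'v state \<Rightarrow> real" where
  "weight E p s = (\<Prod>e\<in>E. (if fst s e \<and> delta (snd s) e then p else 0)
                            + (if \<not> fst s e then 1 - p else 0))"

definition Zconst :: "'v set \<Rightarrow> 'v set set \<Rightarrow> real \<Rightarrow> real" where
  "Zconst V E p = (\<Sum>s\<in>states V E. weight E p s)"

definition IP :: "'v set \<Rightarrow> 'v set set \<Rightarrow> real \<Rightarrow> 'v state \<Rightarrow> real" where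
  "IP V E p s = weight E p s / Zconst V E p"

definition bfac :: "real \<Rightarrow> ('v set \<Rightarrow> bool) \<Rightarrow> 'v set \<Rightarrow> real" where
  "bfac p \<eta> e = (if \<eta> e then 1 - p else p)"

definition condA :: "'v set set \<Rightarrow> 'v state \<Rightarrow> 'v state \<Rightarrow> 'v set \<Rightarrow> bool" where
  "condA E s s' e \<longleftrightarrow> e \<in> E \<and> snd s' = snd s \<and> fst s' = flip (fst s) e \<and> gamma E (fst s) e"

definition condB :: "'v set set \<Rightarrow> 'v state \<Rightarrow> 'v state \<Rightarrow> 'v set \<Rightarrow> bool" where
  "condB E s s' e \<longleftrightarrow> e \<in> E \<and> snd s' = snd s \<and> fst s' = flip (fst s) e
                       \<and> \<not> gamma E (fst s) e \<and> delta (snd s) e"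

definition condC :: "'v set \<Rightarrow> 'v set set \<Rightarrow> 'v state \<Rightarrow> 'v state \<Rightarrow> 'v \<Rightarrow> 'v set \<Rightarrow> bool" where
  "condC V E s s' x e \<longleftrightarrow> x \<in> V \<and> e \<in> E \<and> x \<in> e \<and> fst s' = flip (fst s) e
      \<and> \<not> gamma E (fst s) e \<and> fst s e = delta (snd s) e
      \<and> (\<forall>y. snd s' y = (if conn_without E (fst s) e x y then - snd s y else snd s y))"

(* off-diagonal rate; in each case the edge e (and vertex x) is unique *)
definition offrate :: "'v set \<Rightarrow> 'v set set \<Rightarrow> real \<Rightarrow> 'v state \<Rightarrow> 'v state \<Rightarrow> real" where
  "offrate V E p s s' =
     (if \<exists>e. condA E s s' e then
        (let e = (SOME e. condA E s s' e) in
           bfac p (fst s) e * (if inC E s then 1 else 0))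
      else if \<exists>e. condB E s s' e then
        (let e = (SOME e. condB E s s' e) in
           1/2 * bfac p (fst s) e * (if inC E s then 1 else 0))
      else if \<exists>x e. condC V E s s' x e then
        (let e = (SOME e. \<exists>x. condC V E s s' x e) in
           1/4 * ((1 - p) * (if fst s e then 1 else 0) * (if inC E s then 1 else 0)
                  + p * (if \<not> fst s e then 1 else 0) * (if inC E s' then 1 else 0)))
      else 0)"

definition rate :: "'v set \<Rightarrow> 'v set set \<Rightarrow> real \<Rightarrow> 'v state \<Rightarrow> 'v state \<Rightarrow> real" where
  "rate V E p s s' =
     (if s' = s then - (\<Sum>t\<in>states V E - {s}. offrate V E p s t) else offrate V E p s s')"

end

theory Submission imports Defs begin

lemma delta_pair: "delta \<sigma> {u,v} = (\<sigma> u = \<sigma> v)"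
  unfolding delta_def by (auto simp: doubleton_eq_iff)

lemma flip_inj: "flip \<eta> a = flip \<eta> b \<Longrightarrow> a = b"
  unfolding flip_def by (metis fun_upd_apply)

lemma conn_sym: "conn_without E \<eta> e x y \<Longrightarrow> conn_without E \<eta> e y x"
proof -
  let ?R = "{(a, b). \<exists>f\<in>E. f \<noteq> e \<and> \<eta> f \<and> f = {a, b}}"
  have "sym ?R" by (auto simp: sym_def insert_commute)
  hence "sym (?R\<^sup>*)" by (rule sym_rtrancl)
  thus "conn_without E \<eta> e x y \<Longrightarrow> conn_without E \<eta> e y x"
    unfolding conn_without_def by (meson symD)
qed

lemma conn_flip: "conn_without E (flip \<eta> e) e = conn_without E \<eta> e"
proof -
  have "{(a, b). \<exists>f\<in>E. f \<noteq> e \<and> flip \<eta> e f \<and> f = {a, b}} = {(a, b). \<exists>f\<in>E. f \<noteq> e \<and> \<eta> f \<and> f = {a, b}}"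
    by (auto simp: flip_def)
  thus ?thesis unfolding conn_without_def by simp
qed

lemma gamma_flip: "gamma E (flip \<eta> e) e = gamma E \<eta> e"
  by (simp add: gamma_def conn_flip)

lemma gamma_pair: "gamma E \<eta> {a,b} = conn_without E \<eta> {a,b} a b"
proof
  assume "gamma E \<eta> {a,b}"
  then obtain x y where "{a,b} = {x,y}" "conn_without E \<eta> {a,b} x y" unfolding gamma_def by auto
  thus "conn_without E \<eta> {a,b} a b"
    by (metis conn_sym conn_without_def doubleton_eq_iff rtrancl.rtrancl_refl)
next
  assume "conn_without E \<eta> {a,b} a b" thus "gamma E \<eta> {a,b}" unfolding gamma_def by auto
qed

lemma conn_sigma:
  assumes "conn_without E \<eta> e u v" "\<forall>f\<in>E. f \<noteq> e \<and> \<eta> f \<longrightarrow> delta \<sigma> f"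
  shows "\<sigma> u = \<sigma> v"
  using assms(1) unfolding conn_without_def
proof (induction rule: rtrancl_induct)
  case base then show ?case by simp
next
  case (step y z)
  then obtain f where "f \<in> E" "f \<noteq> e" "\<eta> f" "f = {y,z}" by auto
  with assms(2) have "delta \<sigma> {y,z}" by auto
  with step show ?case by (simp add: delta_pair)
qed

lemma conn_step:
  assumes "f \<in> E" "f \<noteq> e" "\<eta> f" "f = {u,v}"
  shows "conn_without E \<eta> e x u = conn_without E \<eta> e x v"
proof -
  have uv: "conn_without E \<eta> e u v" "conn_without E \<eta> e v u"
    using assms unfolding conn_without_def by (auto intro!: r_into_rtrancl simp: insert_commute)
  show ?thesis using uv unfolding conn_without_def by (meson rtrancl_trans)
qed

definition gf :: "real \<Rightarrow> ('v set \<Rightarrow> bool) \<Rightarrow> ('v \<Rightarrow> int) \<Rightarrow> 'v set \<Rightarrow> real" where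
  "gf p \<eta> \<sigma> f = (if \<eta> f \<and> delta \<sigma> f then p else 0) + (if \<not> \<eta> f then 1 - p else 0)"

lemma weight_split:
  assumes "finite E" "e \<in> E"
  shows "weight E p (\<eta>,\<sigma>) = gf p \<eta> \<sigma> e * (\<Prod>f\<in>E-{e}. gf p \<eta> \<sigma> f)"
  unfolding weight_def using prod.remove[OF assms, of "gf p \<eta> \<sigma>"] by (simp add: gf_def)

lemma weight_cmp:
  assumes "finite E" "e \<in> E" "\<forall>f\<in>E-{e}. gf p \<eta> \<sigma> f = gf p \<eta>' \<sigma>' f"
    and "gf p \<eta> \<sigma> e * X = gf p \<eta>' \<sigma>' e * Y"
  shows "weight E p (\<eta>,\<sigma>) * X = weight E p (\<eta>',\<sigma>') * Y"
proof -
  have "(\<Prod>f\<in>E-{e}. gf p \<eta> \<sigma> f) = (\<Prod>f\<in>E-{e}. gf p \<eta>' \<sigma>' f)"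
    using assms(3) by (intro prod.cong) auto
  then show ?thesis using assms(4) weight_split[OF assms(1,2)]
    by (metis mult.assoc mult.commute)
qed

lemma offA:
  assumes "condA E s s' e"
  shows "offrate V E p s s' = bfac p (fst s) e * (if inC E s then 1 else 0)"
proof -
  have "(SOME e. condA E s s' e) = e"
  proof (rule some_equality)
    show "condA E s s' e" by fact
    fix e' assume "condA E s s' e'" with assms show "e' = e"
      unfolding condA_def by (metis flip_inj)
  qed
  then show ?thesis using assms unfolding offrate_def by (auto simp: Let_def)
qed

lemma offB:
  assumes "condB E s s' e"
  shows "offrate V E p s s' = 1/2 * bfac p (fst s) e * (if inC E s then 1 else 0)"
proof -
  have nA: "\<not> (\<exists>e. condA E s s' e)"
    using assms unfolding condA_def condB_def by (metis flip_inj)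
  have "(SOME e. condB E s s' e) = e"
  proof (rule some_equality)
    show "condB E s s' e" by fact
    fix e' assume "condB E s s' e'" with assms show "e' = e"
      unfolding condB_def by (metis flip_inj)
  qed
  then show ?thesis using assms nA unfolding offrate_def by (auto simp: Let_def)
qed

lemma offC:
  assumes "condC V E s s' x e" "snd s' \<noteq> snd s"
  shows "offrate V E p s s' = 1/4 * ((1 - p) * (if fst s e then 1 else 0) * (if inC E s then 1 else 0)
                  + p * (if \<not> fst s e then 1 else 0) * (if inC E s' then 1 else 0))"
proof -
  have nA: "\<not> (\<exists>e. condA E s s' e)" "\<not> (\<exists>e. condB E s s' e)"
    using assms unfolding condA_def condB_def by auto
  have "(SOME e. \<exists>x. condC V E s s' x e) = e"
  proof (rule some_equality)
    show "\<exists>x. condC V E s s' x e" using assms by blast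
    fix e' assume "\<exists>x. condC V E s s' x e'" with assms show "e' = e"
      unfolding condC_def by (metis flip_inj)
  qed
  then show ?thesis using assms nA unfolding offrate_def by (auto simp: Let_def)
qed

lemma off0:
  assumes "\<not> (\<exists>e. condA E s s' e)" "\<not> (\<exists>e. condB E s s' e)" "\<not> (\<exists>x e. condC V E s s' x e)"
  shows "offrate V E p s s' = 0"
  using assms unfolding offrate_def by auto

lemma flip_flip: "flip (flip \<eta> e) e = \<eta>"
  unfolding flip_def by auto

lemma symA: "condA E s s' e \<Longrightarrow> condA E s' s e"
  unfolding condA_def by (auto simp: flip_flip gamma_flip)

lemma symB: "condB E s s' e \<Longrightarrow> condB E s' s e"
  unfolding condB_def by (auto simp: flip_flip gamma_flip)

lemma edge_pair:
  assumes "E \<subseteq> {{x, y} | x y. x \<in> V \<and> y \<in> V \<and> x \<noteq> y}" "e \<in> E" "x \<in> e"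
  obtains b where "e = {x,b}" "b \<noteq> x" "b \<in> V" "x \<in> V"
  using assms by (auto simp: doubleton_eq_iff)

lemma symC:
  assumes EV: "E \<subseteq> {{x, y} | x y. x \<in> V \<and> y \<in> V \<and> x \<noteq> y}"
    and s: "(\<eta>,\<sigma>) \<in> states V E" and s': "(\<eta>',\<sigma>') \<in> states V E"
    and c: "condC V E (\<eta>,\<sigma>) (\<eta>',\<sigma>') x e"
  shows "condC V E (\<eta>',\<sigma>') (\<eta>,\<sigma>) x e" "\<sigma>' \<noteq> \<sigma>"
    "delta \<sigma>' e = (\<not> delta \<sigma> e)"
proof -
  from c have xV: "x \<in> V" and eE: "e \<in> E" and xe: "x \<in> e" and eta': "\<eta>' = flip \<eta> e"
    and ng: "\<not> gamma E \<eta> e" and ed: "\<eta> e = delta \<sigma> e"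
    and sig': "\<forall>y. \<sigma>' y = (if conn_without E \<eta> e x y then - \<sigma> y else \<sigma> y)"
    unfolding condC_def by auto
  obtain b where eb: "e = {x,b}" "b \<noteq> x" "b \<in> V" using edge_pair[OF EV eE xe] by blast
  have cx: "conn_without E \<eta> e x x" unfolding conn_without_def by simp
  have nb: "\<not> conn_without E \<eta> e x b" using ng eb gamma_pair by metis
  have sx: "\<sigma> x \<in> {-1,1}" "\<sigma> b \<in> {-1,1}" using s xV eb unfolding states_def by auto
  have s'x: "\<sigma>' x = - \<sigma> x" "\<sigma>' b = \<sigma> b" using sig' cx nb by auto
  show "\<sigma>' \<noteq> \<sigma>" using s'x sx by auto
  show dd: "delta \<sigma>' e = (\<not> delta \<sigma> e)" using s'x sx eb by (auto simp: delta_pair)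
  show "condC V E (\<eta>',\<sigma>') (\<eta>,\<sigma>) x e"
    unfolding condC_def using xV eE xe ng ed dd sig'
    by (auto simp: eta' flip_flip gamma_flip conn_flip) (auto simp: flip_def)
qed

lemma inC_iff: "inC E (\<eta>,\<sigma>) = ((\<forall>f\<in>E. f \<noteq> e \<and> \<eta> f \<longrightarrow> delta \<sigma> f) \<and> (e \<in> E \<and> \<eta> e \<longrightarrow> delta \<sigma> e))"
  unfolding inC_def by auto

lemma caseAB:
  assumes EV: "E \<subseteq> {{x, y} | x y. x \<in> V \<and> y \<in> V \<and> x \<noteq> y}" and fE: "finite E"
    and eE: "e \<in> E" and g: "gamma E \<eta> e \<or> delta \<sigma> e" and c: "c \<ge> 0"
  shows "weight E p (\<eta>,\<sigma>) * (c * bfac p \<eta> e * (if inC E (\<eta>,\<sigma>) then 1 else 0))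
       = weight E p (flip \<eta> e,\<sigma>) * (c * bfac p (flip \<eta> e) e * (if inC E (flip \<eta> e,\<sigma>) then 1 else 0))"
proof -
  obtain a b where ab: "e = {a,b}" using EV eE by blast
  have fl1: "\<And>f. f \<noteq> e \<Longrightarrow> flip \<eta> e f = \<eta> f" by (simp add: flip_def)
  have fl2: "flip \<eta> e e = (\<not> \<eta> e)" by (simp add: flip_def)
  have PP: "(\<forall>f\<in>E. f \<noteq> e \<and> flip \<eta> e f \<longrightarrow> delta \<sigma> f) = (\<forall>f\<in>E. f \<noteq> e \<and> \<eta> f \<longrightarrow> delta \<sigma> f)"
    using fl1 by metis
  have i1: "inC E (\<eta>,\<sigma>) = ((\<forall>f\<in>E. f \<noteq> e \<and> \<eta> f \<longrightarrow> delta \<sigma> f) \<and> (\<eta> e \<longrightarrow> delta \<sigma> e))"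
    using inC_iff[of E \<eta> \<sigma> e] eE by simp
  have i2: "inC E (flip \<eta> e,\<sigma>) = ((\<forall>f\<in>E. f \<noteq> e \<and> \<eta> f \<longrightarrow> delta \<sigma> f) \<and> (\<not> \<eta> e \<longrightarrow> delta \<sigma> e))"
    using inC_iff[of E "flip \<eta> e" \<sigma> e] eE PP fl2 by simp
  have key: "delta \<sigma> e" if h: "inC E (\<eta>,\<sigma>) \<or> inC E (flip \<eta> e,\<sigma>)"
  proof (cases "delta \<sigma> e")
    case False
    have P: "\<forall>f\<in>E. f \<noteq> e \<and> \<eta> f \<longrightarrow> delta \<sigma> f" using h i1 i2 by blast
    have ga: "gamma E \<eta> e" using g False by blast
    have "conn_without E \<eta> {a,b} a b" using ga unfolding ab by (simp add: gamma_pair)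
    then have c2: "conn_without E \<eta> e a b" using ab by simp
    have "\<sigma> a = \<sigma> b" by (rule conn_sigma[OF c2 P])
    then show ?thesis using ab by (simp add: delta_pair)
  qed
  have same: "\<forall>f\<in>E-{e}. gf p \<eta> \<sigma> f = gf p (flip \<eta> e) \<sigma> f" by (simp add: gf_def flip_def)
  show ?thesis
  proof (rule weight_cmp[OF fE eE same])
    show "gf p \<eta> \<sigma> e * (c * bfac p \<eta> e * (if inC E (\<eta>, \<sigma>) then 1 else 0)) =
      gf p (flip \<eta> e) \<sigma> e * (c * bfac p (flip \<eta> e) e * (if inC E (flip \<eta> e, \<sigma>) then 1 else 0))"
    proof (cases "delta \<sigma> e")
      case True
      have "inC E (\<eta>,\<sigma>) = inC E (flip \<eta> e,\<sigma>)" using i1 i2 True by simp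
      then show ?thesis using True fl2 unfolding gf_def bfac_def by (cases "\<eta> e") simp_all
    next
      case False
      then show ?thesis using key by auto
    qed
  qed
qed

lemma caseC:
  assumes EV: "E \<subseteq> {{x, y} | x y. x \<in> V \<and> y \<in> V \<and> x \<noteq> y}" and fE: "finite E"
    and s: "(\<eta>,\<sigma>) \<in> states V E" and s': "(\<eta>',\<sigma>') \<in> states V E"
    and c: "condC V E (\<eta>,\<sigma>) (\<eta>',\<sigma>') x e"
  shows "weight E p (\<eta>,\<sigma>) * (1/4 * ((1 - p) * (if \<eta> e then 1 else 0) * (if inC E (\<eta>,\<sigma>) then 1 else 0)
                  + p * (if \<not> \<eta> e then 1 else 0) * (if inC E (\<eta>',\<sigma>') then 1 else 0)))
       = weight E p (\<eta>',\<sigma>') * (1/4 * ((1 - p) * (if \<eta>' e then 1 else 0) * (if inC E (\<eta>',\<sigma>') then 1 else 0)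
                  + p * (if \<not> \<eta>' e then 1 else 0) * (if inC E (\<eta>,\<sigma>) then 1 else 0)))"
proof -
  from c have eE: "e \<in> E" and eta': "\<eta>' = flip \<eta> e"
    and ed: "\<eta> e = delta \<sigma> e"
    and sig': "\<forall>y. \<sigma>' y = (if conn_without E \<eta> e x y then - \<sigma> y else \<sigma> y)"
    unfolding condC_def by auto
  have dd: "delta \<sigma>' e = (\<not> delta \<sigma> e)" using symC[OF EV s s' c] by blast
  have fl: "\<And>f. f \<noteq> e \<Longrightarrow> \<eta>' f = \<eta> f" "\<eta>' e = (\<not> \<eta> e)" by (auto simp: eta' flip_def)
  have dsame: "delta \<sigma>' f = delta \<sigma> f" if "f \<in> E" "f \<noteq> e" "\<eta> f" for f
  proof -
    obtain u v where uv: "f = {u,v}" using EV \<open>f \<in> E\<close> by auto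
    have "conn_without E \<eta> e x u = conn_without E \<eta> e x v" using conn_step[of f E e \<eta> u v x] that uv by blast
    then have "(\<sigma>' u = \<sigma>' v) = (\<sigma> u = \<sigma> v)" using sig' by auto
    then show ?thesis using uv by (simp add: delta_pair)
  qed
  define P where "P = (\<forall>f\<in>E. f \<noteq> e \<and> \<eta> f \<longrightarrow> delta \<sigma> f)"
  have i1: "inC E (\<eta>,\<sigma>) = P" unfolding inC_iff[of _ _ _ e] P_def using ed by blast
  have i2: "inC E (\<eta>',\<sigma>') = P" unfolding inC_iff[of _ _ _ e] P_def using ed dd fl dsame by metis
  have same: "\<forall>f\<in>E-{e}. gf p \<eta> \<sigma> f = gf p \<eta>' \<sigma>' f"
  proof
    fix f assume "f \<in> E - {e}"
    then show "gf p \<eta> \<sigma> f = gf p \<eta>' \<sigma>' f" using fl(1)[of f] dsame[of f] unfolding gf_def by auto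
  qed
  show ?thesis unfolding i1 i2
  proof (rule weight_cmp[OF fE eE same])
    show "gf p \<eta> \<sigma> e * (1/4 * ((1 - p) * (if \<eta> e then 1 else 0) * (if P then 1 else 0)
                  + p * (if \<not> \<eta> e then 1 else 0) * (if P then 1 else 0)))
       = gf p \<eta>' \<sigma>' e * (1/4 * ((1 - p) * (if \<eta>' e then 1 else 0) * (if P then 1 else 0)
                  + p * (if \<not> \<eta>' e then 1 else 0) * (if P then 1 else 0)))"
      unfolding gf_def fl(2) using ed dd by (cases "\<eta> e"; cases P) simp_all
  qed
qed

theorem proposition7:
  fixes V :: "'v set" and E :: "'v set set" and p :: real
  assumes "finite V"
    and "E \<subseteq> {{x, y} | x y. x \<in> V \<and> y \<in> V \<and> x \<noteq> y}"
    and "0 \<le> p" and "p \<le> 1"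
    and "s \<in> states V E" and "s' \<in> states V E"
  shows "IP V E p s * rate V E p s s' = IP V E p s' * rate V E p s' s"
proof (cases "s = s'")
  case True then show ?thesis by simp
next
  case False
  note EV = assms(2)
  have fE: "finite E"
  proof (rule finite_subset[OF EV])
    have "{{x, y} | x y. x \<in> V \<and> y \<in> V \<and> x \<noteq> y} \<subseteq> Pow V" by auto
    then show "finite {{x, y} | x y. x \<in> V \<and> y \<in> V \<and> x \<noteq> y}"
      using assms(1) by (meson finite_Pow_iff finite_subset)
  qed
  obtain \<eta> \<sigma> \<eta>' \<sigma>' where ss: "s = (\<eta>,\<sigma>)" "s' = (\<eta>',\<sigma>')" by fastforce
  have W: "weight E p s * offrate V E p s s' = weight E p s' * offrate V E p s' s"
  proof -
    consider (A) e where "condA E s s' e" | (B) e where "\<not> (\<exists>e. condA E s s' e)" "condB E s s' e"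
      | (C) x e where "\<not> (\<exists>e. condA E s s' e)" "\<not> (\<exists>e. condB E s s' e)" "condC V E s s' x e"
      | (N) "\<not> (\<exists>e. condA E s s' e)" "\<not> (\<exists>e. condB E s s' e)" "\<not> (\<exists>x e. condC V E s s' x e)"
      by blast
    then show ?thesis
    proof cases
      case (A e)
      have A': "condA E s' s e" using symA[OF A] .
      from A have eE: "e \<in> E" and g: "gamma E \<eta> e" and e1: "\<eta>' = flip \<eta> e" "\<sigma>' = \<sigma>"
        unfolding condA_def ss by auto
      have o1: "offrate V E p s s' = bfac p (fst s) e * (if inC E s then 1 else 0)" by (rule offA[OF A])
      have o2: "offrate V E p s' s = bfac p (fst s') e * (if inC E s' then 1 else 0)" by (rule offA[OF A'])
      show ?thesis unfolding o1 o2 unfolding ss e1 fst_conv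
        using caseAB[OF EV fE eE, of \<eta> \<sigma> 1 p] g by (simp add: flip_flip)
    next
      case (B e)
      have B': "condB E s' s e" using symB[OF B(2)] .
      from B have eE: "e \<in> E" and g: "delta \<sigma> e" and e1: "\<eta>' = flip \<eta> e" "\<sigma>' = \<sigma>"
        unfolding condB_def ss by auto
      have o1: "offrate V E p s s' = 1/2 * bfac p (fst s) e * (if inC E s then 1 else 0)" by (rule offB[OF B(2)])
      have o2: "offrate V E p s' s = 1/2 * bfac p (fst s') e * (if inC E s' then 1 else 0)" by (rule offB[OF B'])
      show ?thesis unfolding o1 o2 unfolding ss e1 fst_conv
        using caseAB[OF EV fE eE, of \<eta> \<sigma> "1/2" p] g by (simp add: flip_flip mult.assoc)
    next
      case (C x e)
      have c: "condC V E (\<eta>,\<sigma>) (\<eta>',\<sigma>') x e" using C(3) ss by simp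
      note sy = symC[OF EV assms(5)[unfolded ss(1)] assms(6)[unfolded ss(2)] c]
      have o1: "offrate V E p s s' = 1/4 * ((1 - p) * (if \<eta> e then 1 else 0) * (if inC E (\<eta>,\<sigma>) then 1 else 0)
                  + p * (if \<not> \<eta> e then 1 else 0) * (if inC E (\<eta>',\<sigma>') then 1 else 0))"
        unfolding ss using offC[OF c] sy(2) by simp
      have o2: "offrate V E p s' s = 1/4 * ((1 - p) * (if \<eta>' e then 1 else 0) * (if inC E (\<eta>',\<sigma>') then 1 else 0)
                  + p * (if \<not> \<eta>' e then 1 else 0) * (if inC E (\<eta>,\<sigma>) then 1 else 0))"
        unfolding ss using offC[OF sy(1)] sy(2) by simp
      show ?thesis unfolding o1 o2 unfolding ss
        by (rule caseC[OF EV fE assms(5)[unfolded ss(1)] assms(6)[unfolded ss(2)] c])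
    next
      case N
      have "\<not> (\<exists>e. condA E s' s e)" using N(1) symA by blast
      moreover have "\<not> (\<exists>e. condB E s' s e)" using N(2) symB by blast
      moreover have "\<not> (\<exists>x e. condC V E s' s x e)"
        using N(3) symC[OF EV assms(6)[unfolded ss(2)] assms(5)[unfolded ss(1)]] ss by blast
      ultimately have "offrate V E p s' s = 0" by (rule off0)
      moreover have "offrate V E p s s' = 0" using N by (rule off0)
      ultimately show ?thesis by simp
    qed
  qed
  have "IP V E p s * rate V E p s s' = weight E p s * offrate V E p s s' / Zconst V E p"
    using False unfolding IP_def rate_def by simp
  also have "\<dots> = weight E p s' * offrate V E p s' s / Zconst V E p" using W by simp
  also have "\<dots> = IP V E p s' * rate V E p s' s"
    using False unfolding IP_def rate_def by simp
  finally show ?thesis .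
qed

end
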